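(* Let $p\ge 2$ be an integer which is not a prime, not twice an odd prime, not $4$ and not $9$. Then $\#_p<\lfloor p/2\rfloor$.
   Context: $\#_p$ denotes the number of squares in the ring $\mathbb Z/p\mathbb Z$, i.e. the cardinality of $\{n^2 \bmod p : n\in\mathbb Z\}$. *)

theory Defs
  imports "HOL-Computational_Algebra.Primes"
begin

definition num_squares :: "int \<Rightarrow> nat" where
  "num_squares p = card {(n^2) mod p | n :: int. True}"

end

theory Submission
  imports Defs
begin

lemma sq_image:
  fixes p :: int
  assumes "p \<ge> 2"
  shows "{(n^2) mod p | n :: int. True} = (\<lambda>n. n^2 mod p) ` {0..p div 2}"
proof
  show "(\<lambda>n. n^2 mod p) ` {0..p div 2} \<subseteq> {(n^2) mod p | n :: int. True}" by blast
  show "{(n^2) mod p | n :: int. True} \<subseteq> (\<lambda>n. n^2 mod p) ` {0..p div 2}"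
  proof
    fix x assume "x \<in> {(n^2) mod p | n :: int. True}"
    then obtain n where x: "x = n^2 mod p" by blast
    define r where "r = n mod p"
    have r: "0 \<le> r" "r < p" using assms by (auto simp: r_def)
    have xr: "x = r^2 mod p" unfolding x r_def by (simp add: power_mod)
    show "x \<in> (\<lambda>n. n^2 mod p) ` {0..p div 2}"
    proof (cases "r \<le> p div 2")
      case True then show ?thesis using r xr by auto
    next
      case False
      have "(p - r)^2 = r^2 + (p - 2*r) * p" by (simp add: power2_eq_square algebra_simps)
      then have "(p - r)^2 mod p = r^2 mod p" by simp
      moreover have "p - r \<in> {0..p div 2}" using False r by auto
      ultimately show ?thesis using xr by (metis image_eqI)
    qed
  qed
qed

lemma collapse:
  fixes p u v u' v' :: int
  assumes p: "p \<ge> 2"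
    and "u \<in> {0..p div 2}" "v \<in> {0..p div 2}" "u' \<in> {0..p div 2}" "v' \<in> {0..p div 2}"
    and "u \<noteq> v" "u' \<noteq> u" "u' \<noteq> v" "v' \<noteq> u" "v' \<noteq> v"
    and "u^2 mod p = u'^2 mod p" "v^2 mod p = v'^2 mod p"
  shows "int (num_squares p) < p div 2"
proof -
  let ?f = "\<lambda>n::int. n^2 mod p"
  let ?A = "{0..p div 2}"
  have "?f ` ?A \<subseteq> ?f ` (?A - {u, v})"
  proof
    fix y assume "y \<in> ?f ` ?A"
    then obtain n where n: "n \<in> ?A" "y = ?f n" by blast
    show "y \<in> ?f ` (?A - {u, v})"
    proof (cases "n = u")
      case True then show ?thesis using n assms by (intro image_eqI[of _ _ u']) auto
    next
      case False
      show ?thesis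
      proof (cases "n = v")
        case True then show ?thesis using n assms by (intro image_eqI[of _ _ v']) auto
      next
        case False2: False
        then show ?thesis using n False by auto
      qed
    qed
  qed
  then have "card (?f ` ?A) \<le> card (?f ` (?A - {u, v}))" by (intro card_mono) auto
  also have "\<dots> \<le> card (?A - {u, v})" by (intro card_image_le) auto
  also have "\<dots> = card ?A - 2" using assms by (subst card_Diff_subset) auto
  finally have "int (card (?f ` ?A)) \<le> int (card ?A - 2)" by simp
  moreover have "card ?A = nat (p div 2 + 1)" by simp
  moreover have "p div 2 \<ge> 1" using p by simp
  ultimately have "int (card (?f ` ?A)) \<le> p div 2 - 1" by simp
  then show ?thesis unfolding num_squares_def using sq_image[OF p] by simp
qed


lemma factor:
  fixes p :: int
  assumes "p \<ge> 2" "\<not> prime p"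
  shows "\<exists>a b. 2 \<le> a \<and> a \<le> b \<and> p = a * b"
proof -
  from assms obtain m where m: "m \<ge> 0" "m dvd p" "m \<noteq> 1" "m \<noteq> p"
    unfolding Primes.prime_int_iff by auto
  then obtain k where k: "p = m * k" by blast
  have "m \<noteq> 0" using k assms by auto
  then have m2: "m \<ge> 2" using m by auto
  have "k > 0" using k assms m2 by (smt (verit) mult_nonneg_nonpos)
  moreover have "k \<noteq> 1" using k m by auto
  ultimately have k2: "k \<ge> 2" by auto
  show ?thesis
  proof (cases "m \<le> k")
    case True then show ?thesis using m2 k by blast
  next
    case False then show ?thesis using k2 k by (intro exI[of _ k] exI[of _ m]) auto
  qed
qed

lemma caseA:
  fixes k :: int
  assumes "k \<ge> 2"
  shows "int (num_squares (4*k)) < (4*k) div 2"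
proof (rule collapse[of _ "2*k" "2*k-1" 0 1])
  have "(2*k)^2 = 0 + k * (4*k)" by (simp add: power2_eq_square)
  then show "(2*k)^2 mod (4*k) = 0^2 mod (4*k)" by simp
  have "(2*k-1)^2 = 1 + (k - 1) * (4*k)" by (simp add: power2_eq_square algebra_simps)
  then show "(2*k-1)^2 mod (4*k) = 1^2 mod (4*k)" using assms by simp
qed (use assms in auto)

lemma caseB:
  fixes a b :: int
  assumes "3 \<le> a" "a \<le> b"
  shows "int (num_squares (2*(a*b))) < (2*(a*b)) div 2"
proof (rule collapse[of _ "a+b" "2*a+b" "b-a" "\<bar>b-2*a\<bar>"])
  have "(a-1)*(b-1) \<ge> 2*2" using assms by (intro mult_mono) auto
  moreover have "(a-1)*(b-2) \<ge> 2*1" using assms by (intro mult_mono) auto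
  ultimately have h1: "a + b \<le> a*b" and h2: "2*a+b \<le> a*b" by (auto simp: algebra_simps)
  show "a + b \<in> {0..2 * (a * b) div 2}" using h1 assms by auto
  show "2*a + b \<in> {0..2 * (a * b) div 2}" using h2 assms by auto
  show "b - a \<in> {0..2 * (a * b) div 2}" using h1 assms by auto
  show "\<bar>b-2*a\<bar> \<in> {0..2 * (a * b) div 2}" using h2 assms by auto
  have "(a+b)^2 = (b-a)^2 + 2 * (2*(a*b))" by (simp add: power2_eq_square algebra_simps)
  then show "(a+b)^2 mod (2*(a*b)) = (b-a)^2 mod (2*(a*b))" by (simp only: mod_mult_self1 mod_mult_self2)
  have "(2*a+b)^2 = \<bar>b-2*a\<bar>^2 + 4 * (2*(a*b))" unfolding power2_abs by (simp add: power2_eq_square algebra_simps)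
  then show "(2*a+b)^2 mod (2*(a*b)) = \<bar>b-2*a\<bar>^2 mod (2*(a*b))" by (simp only: mod_mult_self1 mod_mult_self2)
  have "a * b \<ge> 3 * 3" using assms by (intro mult_mono) auto
  then show "2 \<le> 2*(a*b)" by simp
  show "a + b \<noteq> 2*a+b" "b - a \<noteq> a + b" "b - a \<noteq> 2*a+b" using assms by simp_all
  show "\<bar>b-2*a\<bar> \<noteq> a + b" "\<bar>b-2*a\<bar> \<noteq> 2*a+b" using assms by (simp_all add: abs_if)
qed

lemma caseD:
  fixes a :: int
  assumes "5 \<le> a"
  shows "int (num_squares (a*a)) < (a*a) div 2"
proof (rule collapse[of _ a "2*a" 0 0])
  have q: "a*a \<ge> 5*a" using assms by (intro mult_mono) auto
  have "a*a = 2*(a*a div 2) + (a*a) mod 2" by simp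
  moreover have "(a*a) mod 2 < 2" by simp
  ultimately have "a*a div 2 \<ge> 2*a" using q assms by linarith
  then show "a \<in> {0..a*a div 2}" "2*a \<in> {0..a*a div 2}" "0 \<in> {0..a*a div 2}"
     "2 \<le> a*a" using assms q by auto
  have "a^2 = 0 + 1 * (a*a)" by (simp add: power2_eq_square)
  then show "a^2 mod (a*a) = 0^2 mod (a*a)" by simp
  have "(2*a)^2 = 0 + 4 * (a*a)" by (simp add: power2_eq_square)
  then show "(2*a)^2 mod (a*a) = 0^2 mod (a*a)" by (simp only: mod_mult_self1) simp
qed (use assms in auto)+

lemma caseC:
  fixes c d :: int
  assumes "1 \<le> c" "c < d"
  defines "p \<equiv> (2*c+1)*(2*d+1)"
  shows "int (num_squares p) < p div 2"
proof (rule collapse[of _ "c+d+1" "d+3*c+2" "d-c" "\<bar>d-3*c-1\<bar>"])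
  have pd: "p div 2 = 2*c*d + c + d"
  proof -
    have "p = 1 + 2 * (2*c*d + c + d)" unfolding p_def by (simp add: algebra_simps)
    then show ?thesis by simp
  qed
  have cd: "c*d \<ge> c*2" using assms by (intro mult_left_mono) auto
  have e: "2*c*d = 2*(c*d)" by simp
  have h: "d+3*c+2 \<le> 2*c*d + c + d" using assms cd e by linarith
  show "c+d+1 \<in> {0..p div 2}" "d+3*c+2 \<in> {0..p div 2}" "d-c \<in> {0..p div 2}"
    "\<bar>d-3*c-1\<bar> \<in> {0..p div 2}" using h assms unfolding pd by auto
  show "2 \<le> p" using h assms pd by simp
  have "(c+d+1)^2 = (d-c)^2 + 1 * p" unfolding p_def by (simp add: power2_eq_square algebra_simps)
  then show "(c+d+1)^2 mod p = (d-c)^2 mod p" by (simp only: mod_mult_self1 mod_mult_self2)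
  have "(d+3*c+2)^2 = \<bar>d-3*c-1\<bar>^2 + 3 * p" unfolding p_def power2_abs by (simp add: power2_eq_square algebra_simps)
  then show "(d+3*c+2)^2 mod p = \<bar>d-3*c-1\<bar>^2 mod p" by (simp only: mod_mult_self1 mod_mult_self2)
  show "c+d+1 \<noteq> d+3*c+2" "d-c \<noteq> c+d+1" "d-c \<noteq> d+3*c+2" using assms by simp_all
  show "\<bar>d-3*c-1\<bar> \<noteq> c+d+1" "\<bar>d-3*c-1\<bar> \<noteq> d+3*c+2" using assms by (simp_all add: abs_if)
qed


theorem lemma4:
  fixes p :: int
  assumes "p \<ge> 2"
    and "\<not> prime p"
    and "\<not> (\<exists>q. prime q \<and> odd q \<and> p = 2 * q)"
    and "p \<noteq> 4"
    and "p \<noteq> 9"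
  shows "int (num_squares p) < p div 2"
proof (cases "4 dvd p")
  case True
  then obtain k where k: "p = 4*k" by blast
  have "k \<ge> 2" using k assms(1,4) by auto
  then show ?thesis using caseA k by simp
next
  case n4: False
  show ?thesis
  proof (cases "even p")
    case True
    then obtain m where m: "p = 2*m" by blast
    have modd: "odd m" using m n4 by auto
    have "m \<noteq> 1" using m assms(2) by auto
    then have m3: "m \<ge> 3" using m assms(1) modd by presburger
    have "\<not> prime m" using assms(3) m modd by blast
    then obtain a b where ab: "2 \<le> a" "a \<le> b" "m = a*b" using factor[of m] m3 by auto
    have "odd a" using ab modd by auto
    then have "a \<ge> 3" using ab by presburger
    then show ?thesis using caseB[of a b] ab m by simp
  next
    case podd: False
    obtain a b where ab: "2 \<le> a" "a \<le> b" "p = a*b" using factor assms(1,2) by blast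
    have ao: "odd a" and bo: "odd b" using ab podd by auto
    show ?thesis
    proof (cases "a = b")
      case True
      have "a \<noteq> 3" using True ab assms(5) by auto
      then have "a \<ge> 5" using ao ab by presburger
      then show ?thesis using caseD[of a] ab True by simp
    next
      case False
      obtain c where c: "a = 2*c+1" using ao by (metis oddE)
      obtain d where d: "b = 2*d+1" using bo by (metis oddE)
      have "1 \<le> c" "c < d" using c d ab False by auto
      then show ?thesis using caseC[of c d] ab c d by simp
    qed
  qed
qed

end
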